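(* Let $A,B,C$ be rooted trees, let $f\colon B\to A$ be a light confluent epimorphism and $g\colon C\to A$ a confluent epimorphism. Let $D$ be the graph with $V(D)=\{(b,c)\in V(B)\times V(C): f(b)=g(c)\}$ and $\langle (b,c),(b',c')\rangle\in E(D)$ iff $\langle b,b'\rangle\in E(B)$ and $\langle c,c'\rangle\in E(C)$, with root $(r_B,r_C)$, and let $f_0(b,c)=b$, $g_0(b,c)=c$. Then $D$ is a rooted tree, $f_0\colon D\to B$ is a confluent epimorphism and $g_0\colon D\to C$ is a light confluent epimorphism (of rooted trees), and $f\circ f_0=g\circ g_0$. Moreover, if $g$ is light then so is $f_0$, and if both $f$ and $g$ are end vertex preserving then so are $f_0$ and $g_0$.
   Context: A graph is a pair $(V,E)$ with $E\subseteq V^2$ reflexive and symmetric. A tree is a finite graph in which any two distinct vertices are joined by a unique sequence of pairwise distinct vertices with consecutive ones adjacent. A rooted tree is a tree $T$ with a distinguished vertex $r_T$ (the root); $x\le_T y$ means the path from $r_T$ to $y$ contains $x$. An epimorphism between rooted trees is a map on vertices sending edges to edges, surjective on vertices and on edges, sending root to root and order-preserving ($a\le b\Rightarrow f(a)\le f(b)$). A set $S$ of vertices is connected if it cannot be written as a union of two nonempty disjoint sets with no edge between them; components are maximal connected subsets. An epimorphism $f$ is confluent if for every connected $Q$ in the target and every component $K$ of $f^{-1}(Q)$, $f(K)=Q$; it is light if no two distinct vertices with the same image are joined by an edge. An end vertex of a rooted tree is a non-root vertex of order $1$ (order = number of non-degenerate edges containing it); an epimorphism is end vertex preserving if it maps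 end vertices to end vertices. *)

theory Defs
  imports Main
begin

definition graph :: "'a set \<Rightarrow> ('a \<times> 'a) set \<Rightarrow> bool" where
  "graph V E \<longleftrightarrow> E \<subseteq> V \<times> V \<and> (\<forall>v\<in>V. (v, v) \<in> E) \<and> (\<forall>x y. (x, y) \<in> E \<longrightarrow> (y, x) \<in> E)"

definition is_path :: "'a set \<Rightarrow> ('a \<times> 'a) set \<Rightarrow> 'a list \<Rightarrow> 'a \<Rightarrow> 'a \<Rightarrow> bool" where
  "is_path V E xs x y \<longleftrightarrow> xs \<noteq> [] \<and> hd xs = x \<and> last xs = y \<and> distinct xs \<and> set xs \<subseteq> V
     \<and> (\<forall>i. Suc i < length xs \<longrightarrow> (xs ! i, xs ! Suc i) \<in> E)"

definition tree :: "'a set \<Rightarrow> ('a \<times> 'a) set \<Rightarrow> bool" where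
  "tree V E \<longleftrightarrow> graph V E \<and> finite V \<and>
     (\<forall>x\<in>V. \<forall>y\<in>V. x \<noteq> y \<longrightarrow> (\<exists>!xs. is_path V E xs x y))"

definition rooted_tree :: "'a set \<Rightarrow> ('a \<times> 'a) set \<Rightarrow> 'a \<Rightarrow> bool" where
  "rooted_tree V E r \<longleftrightarrow> tree V E \<and> r \<in> V"

definition tree_le :: "'a set \<Rightarrow> ('a \<times> 'a) set \<Rightarrow> 'a \<Rightarrow> 'a \<Rightarrow> 'a \<Rightarrow> bool" where
  "tree_le V E r x y \<longleftrightarrow> (\<exists>xs. is_path V E xs r y \<and> x \<in> set xs)"

definition epimorphism ::
  "'a set \<Rightarrow> ('a \<times> 'a) set \<Rightarrow> 'a \<Rightarrow> 'b set \<Rightarrow> ('b \<times> 'b) set \<Rightarrow> 'b \<Rightarrow> ('a \<Rightarrow> 'b) \<Rightarrow> bool" where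
  "epimorphism V1 E1 r1 V2 E2 r2 f \<longleftrightarrow>
     f ` V1 = V2 \<and>
     (\<forall>a b. (a, b) \<in> E1 \<longrightarrow> (f a, f b) \<in> E2) \<and>
     (\<lambda>(a, b). (f a, f b)) ` E1 = E2 \<and>
     f r1 = r2 \<and>
     (\<forall>a\<in>V1. \<forall>b\<in>V1. tree_le V1 E1 r1 a b \<longrightarrow> tree_le V2 E2 r2 (f a) (f b))"

definition connected_set :: "('a \<times> 'a) set \<Rightarrow> 'a set \<Rightarrow> bool" where
  "connected_set E S \<longleftrightarrow> \<not> (\<exists>P Q. P \<noteq> {} \<and> Q \<noteq> {} \<and> P \<inter> Q = {} \<and> P \<union> Q = S \<and>
      (\<forall>p\<in>P. \<forall>q\<in>Q. (p, q) \<notin> E))"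

definition component_of :: "('a \<times> 'a) set \<Rightarrow> 'a set \<Rightarrow> 'a set \<Rightarrow> bool" where
  "component_of E S K \<longleftrightarrow> K \<subseteq> S \<and> connected_set E K \<and>
     (\<forall>K'. K \<subseteq> K' \<and> K' \<subseteq> S \<and> connected_set E K' \<longrightarrow> K' = K)"

definition confluent ::
  "'a set \<Rightarrow> ('a \<times> 'a) set \<Rightarrow> 'b set \<Rightarrow> ('b \<times> 'b) set \<Rightarrow> ('a \<Rightarrow> 'b) \<Rightarrow> bool" where
  "confluent V1 E1 V2 E2 f \<longleftrightarrow>
     (\<forall>Q. Q \<subseteq> V2 \<and> connected_set E2 Q \<longrightarrow>
        (\<forall>K. component_of E1 {v \<in> V1. f v \<in> Q} K \<longrightarrow> f ` K = Q))"

definition light :: "'a set \<Rightarrow> ('a \<times> 'a) set \<Rightarrow> ('a \<Rightarrow> 'b) \<Rightarrow> bool" where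
  "light V1 E1 f \<longleftrightarrow> (\<forall>a\<in>V1. \<forall>b\<in>V1. a \<noteq> b \<and> f a = f b \<longrightarrow> (a, b) \<notin> E1)"

definition vorder :: "'a set \<Rightarrow> ('a \<times> 'a) set \<Rightarrow> 'a \<Rightarrow> nat" where
  "vorder V E v = card {w \<in> V. w \<noteq> v \<and> (v, w) \<in> E}"

definition end_vertex :: "'a set \<Rightarrow> ('a \<times> 'a) set \<Rightarrow> 'a \<Rightarrow> 'a \<Rightarrow> bool" where
  "end_vertex V E r v \<longleftrightarrow> v \<in> V \<and> v \<noteq> r \<and> vorder V E v = 1"

definition end_vertex_preserving ::
  "'a set \<Rightarrow> ('a \<times> 'a) set \<Rightarrow> 'a \<Rightarrow> 'b set \<Rightarrow> ('b \<times> 'b) set \<Rightarrow> 'b \<Rightarrow> ('a \<Rightarrow> 'b) \<Rightarrow> bool" where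
  "end_vertex_preserving V1 E1 r1 V2 E2 r2 f \<longleftrightarrow>
     (\<forall>v. end_vertex V1 E1 r1 v \<longrightarrow> end_vertex V2 E2 r2 (f v))"

end

theory Submission
  imports Defs
begin

lemma is_path_succ:
  "is_path V E xs x y \<longleftrightarrow> xs \<noteq> [] \<and> hd xs = x \<and> last xs = y \<and> distinct xs \<and> set xs \<subseteq> V
     \<and> successively (\<lambda>a b. (a, b) \<in> E) xs"
  unfolding is_path_def successively_conv_nth by blast

definition pstruct :: "'a set \<Rightarrow> ('a \<times> 'a) set \<Rightarrow> 'a \<Rightarrow> ('a \<Rightarrow> 'a) \<Rightarrow> ('a \<Rightarrow> nat) \<Rightarrow> bool" where
"pstruct V E r p h \<longleftrightarrow> graph V E \<and> finite V \<and> r \<in> V \<and> h r = 0 \<and>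
 (\<forall>x\<in>V. x \<noteq> r \<longrightarrow> p x \<in> V \<and> (x, p x) \<in> E \<and> Suc (h (p x)) = h x) \<and>
 (\<forall>u v. (u,v) \<in> E \<longrightarrow> u = v \<or> (u \<noteq> r \<and> v = p u) \<or> (v \<noteq> r \<and> u = p v))"

lemma ps_graph: "pstruct V E r p h \<Longrightarrow> graph V E" by (simp add: pstruct_def)
lemma ps_finite: "pstruct V E r p h \<Longrightarrow> finite V" by (simp add: pstruct_def)
lemma ps_root: "pstruct V E r p h \<Longrightarrow> r \<in> V" by (simp add: pstruct_def)
lemma ps_h0: "pstruct V E r p h \<Longrightarrow> h r = 0" by (simp add: pstruct_def)
lemma ps_par: "pstruct V E r p h \<Longrightarrow> x \<in> V \<Longrightarrow> x \<noteq> r \<Longrightarrow> p x \<in> V \<and> (x, p x) \<in> E \<and> Suc (h (p x)) = h x"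
  by (simp add: pstruct_def)
lemma ps_edge: "pstruct V E r p h \<Longrightarrow> (u,v) \<in> E \<Longrightarrow> u = v \<or> (u \<noteq> r \<and> v = p u) \<or> (v \<noteq> r \<and> u = p v)"
  by (simp add: pstruct_def)
lemma graph_in: "graph V E \<Longrightarrow> (u,v) \<in> E \<Longrightarrow> u \<in> V \<and> v \<in> V"
  by (auto simp: graph_def)
lemma graph_sym: "graph V E \<Longrightarrow> (u,v) \<in> E \<Longrightarrow> (v,u) \<in> E"
  by (auto simp: graph_def)
lemma graph_refl: "graph V E \<Longrightarrow> v \<in> V \<Longrightarrow> (v,v) \<in> E"
  by (auto simp: graph_def)

lemma ps_h_root: "pstruct V E r p h \<Longrightarrow> x \<in> V \<Longrightarrow> h x = 0 \<Longrightarrow> x = r"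
  using ps_par by fastforce

lemma ps_funpow:
  assumes ps: "pstruct V E r p h" and x: "x \<in> V"
  shows "j \<le> h x \<Longrightarrow> (p^^j) x \<in> V \<and> h ((p^^j) x) = h x - j"
proof (induction j)
  case 0 then show ?case using x by simp
next
  case (Suc j)
  then have IH: "(p^^j) x \<in> V" "h ((p^^j) x) = h x - j" by auto
  have "(p^^j) x \<noteq> r" using IH Suc.prems ps_h0[OF ps] by auto
  then have "p ((p^^j) x) \<in> V" "Suc (h (p ((p^^j) x))) = h ((p^^j) x)"
    using ps_par[OF ps IH(1)] by auto
  then show ?case using IH by simp
qed

lemma ps_funpow_root:
  assumes ps: "pstruct V E r p h" and x: "x \<in> V"
  shows "(p^^(h x)) x = r"
  using ps_funpow[OF ps x, of "h x"] ps_h_root[OF ps] by auto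

lemma ps_par_ne: "pstruct V E r p h \<Longrightarrow> x \<in> V \<Longrightarrow> x \<noteq> r \<Longrightarrow> p x \<noteq> x"
  using ps_par by fastforce

lemma path_shape:
  assumes ps: "pstruct V E r p h" and P: "is_path V E xs x y"
  shows "\<exists>m<length xs. (\<forall>i\<le>m. xs!i = (p^^i) x) \<and>
           (\<forall>d. m + d < length xs \<longrightarrow> xs!(length xs - 1 - d) = (p^^d) y) \<and>
           h x = h (xs!m) + m \<and> h y = h (xs!m) + (length xs - 1 - m)"
proof -
  define n where "n = length xs"
  have ne: "xs \<noteq> []" and hd: "hd xs = x" and lst: "last xs = y" and dist: "distinct xs"
    and sub: "set xs \<subseteq> V" and adj: "\<And>i. Suc i < n \<Longrightarrow> (xs!i, xs!Suc i) \<in> E"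
    using P unfolding is_path_def n_def by auto
  have n0: "n > 0" using ne n_def by simp
  have inV: "\<And>i. i < n \<Longrightarrow> xs!i \<in> V" using sub n_def nth_mem by blast
  define up where "up i \<longleftrightarrow> xs!i \<noteq> r \<and> xs!Suc i = p (xs!i)" for i
  define dn where "dn i \<longleftrightarrow> xs!Suc i \<noteq> r \<and> xs!i = p (xs!Suc i)" for i
  have updn: "up i \<or> dn i" if "Suc i < n" for i
  proof -
    have "xs!i \<noteq> xs!Suc i" using dist that n_def by (simp add: nth_eq_iff_index_eq)
    then show ?thesis using ps_edge[OF ps adj[OF that]] unfolding up_def dn_def by auto
  qed
  have dn_next: "dn (Suc i)" if "dn i" "Suc (Suc i) < n" for i
  proof (rule ccontr)
    assume "\<not> dn (Suc i)"
    then have "up (Suc i)" using updn that(2) by blast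
    then have "xs!Suc (Suc i) = xs!i" using that(1) unfolding up_def dn_def by simp
    then show False using dist that(2) n_def by (simp add: nth_eq_iff_index_eq)
  qed
  have dn_all: "dn (i + k)" if "dn i" "Suc (i + k) < n" for i k
    using that(2) proof (induction k)
    case 0 then show ?case using that(1) by simp
  next
    case (Suc k) then show ?case using dn_next by simp
  qed
  obtain m where mn: "m < n" and upm: "\<And>i. i < m \<Longrightarrow> up i" and
     dnm: "\<And>k. m \<le> k \<Longrightarrow> Suc k < n \<Longrightarrow> dn k"
  proof (cases "\<exists>i. Suc i < n \<and> dn i")
    case True
    define m where "m = (LEAST i. Suc i < n \<and> dn i)"
    have m1: "Suc m < n \<and> dn m" unfolding m_def using True by (rule LeastI_ex)
    have m2: "up i" if "i < m" for i
    proof -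
      have "\<not> (Suc i < n \<and> dn i)" using not_less_Least[OF that[unfolded m_def]] .
      moreover have "Suc i < n" using that m1 by simp
      ultimately show ?thesis using updn by blast
    qed
    have m3: "dn k" if "m \<le> k" "Suc k < n" for k
      using dn_all[OF conjunct2[OF m1], of "k - m"] that by simp
    show ?thesis using that[of m] m1 m2 m3 by auto
  next
    case False
    then show ?thesis using that[of "n - 1"] updn n0 by fastforce
  qed
  have upx: "xs!i = (p^^i) x \<and> h x = h (xs!i) + i" if "i \<le> m" for i
    using that proof (induction i)
    case 0 then show ?case using hd ne by (simp add: hd_conv_nth)
  next
    case (Suc i)
    then have IH: "xs!i = (p^^i) x" "h x = h (xs!i) + i" by auto
    have u: "up i" using upm Suc.prems by simp
    have "i < n" using Suc.prems mn by simp
    then have "Suc (h (p (xs!i))) = h (xs!i)" using ps_par[OF ps inV] u unfolding up_def by blast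
    then show ?case using IH u unfolding up_def by simp
  qed
  have dny: "xs!(n - 1 - d) = (p^^d) y \<and> h y = h (xs!(n - 1 - d)) + d" if "m + d < n" for d
    using that proof (induction d)
    case 0 then show ?case using lst ne n_def by (simp add: last_conv_nth)
  next
    case (Suc d)
    then have IH: "xs!(n - 1 - d) = (p^^d) y" "h y = h (xs!(n - 1 - d)) + d" by auto
    define k where "k = n - 1 - Suc d"
    have k1: "Suc k = n - 1 - d" "m \<le> k" "Suc k < n" using Suc.prems unfolding k_def by auto
    have dk: "dn k" using dnm k1 by simp
    have "Suc (h (p (xs!Suc k))) = h (xs!Suc k)" using ps_par[OF ps inV[OF k1(3)]] dk unfolding dn_def by blast
    then show ?case using IH dk k1 unfolding dn_def k_def[symmetric] by simp
  qed
  show ?thesis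
  proof (intro exI[of _ m] conjI)
    show "m < length xs" using mn n_def by simp
    show "\<forall>i\<le>m. xs ! i = (p ^^ i) x" using upx by simp
    show "\<forall>d. m + d < length xs \<longrightarrow> xs ! (length xs - 1 - d) = (p ^^ d) y" using dny n_def by simp
    show "h x = h (xs ! m) + m" using upx[of m] by blast
    show "h y = h (xs ! m) + (length xs - 1 - m)"
      using dny[of "n - 1 - m"] mn n_def by simp
  qed
qed

lemma shape_aux:
  assumes mn: "m < n" and mn': "m' < n'"
    and x1: "\<forall>i\<le>m. xs!i = (p^^i) x" and y1: "\<forall>d. m + d < n \<longrightarrow> xs!(n-1-d) = (p^^d) y"
    and hx1: "hx = hm + m" and hy1: "hy = hm + (n-1-m)"
    and x2: "\<forall>i\<le>m'. ys!i = (p^^i) x" and y2: "\<forall>d. m' + d < n' \<longrightarrow> ys!(n'-1-d) = (p^^d) y"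
    and hx2: "hx = hm' + m'" and hy2: "hy = hm' + (n'-1-m')"
    and dist: "distinct ys" and len: "length ys = n'" and le: "m \<le> m'"
  shows "m = m' \<and> n = n'"
proof -
  define b where "b = n - 1 - m"
  define b' where "b' = n' - 1 - m'"
  have eq: "(p^^m) x = (p^^b) y" using x1 y1[rule_format, of b] mn unfolding b_def by simp
  have bb: "b \<le> b'" using hx1 hy1 hx2 hy2 le unfolding b_def b'_def by linarith
  have "m = m'"
  proof (rule ccontr)
    assume "m \<noteq> m'"
    then have lt: "m < m'" using le by simp
    have e1: "ys!m = (p^^m) x" using x2 lt by simp
    have e2: "ys!(n'-1-b) = (p^^b) y" using y2 bb mn' unfolding b'_def by simp
    have "ys!m = ys!(n'-1-b)" using e1 e2 eq by simp
    then have "m = n'-1-b" using dist len lt mn' by (simp add: nth_eq_iff_index_eq)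
    then show False using lt bb mn' unfolding b'_def by linarith
  qed
  then have "b = b'" using hx1 hy1 hx2 hy2 unfolding b_def b'_def by linarith
  then show ?thesis using \<open>m = m'\<close> mn mn' unfolding b_def b'_def by linarith
qed

lemma path_unique:
  assumes ps: "pstruct V E r p h" and P1: "is_path V E xs x y" and P2: "is_path V E ys x y"
  shows "xs = ys"
proof -
  obtain m where m: "m < length xs" "\<forall>i\<le>m. xs!i = (p^^i) x"
     "\<forall>d. m + d < length xs \<longrightarrow> xs!(length xs - 1 - d) = (p^^d) y"
     "h x = h (xs!m) + m" "h y = h (xs!m) + (length xs - 1 - m)"
    using path_shape[OF ps P1] by blast
  obtain m' where m': "m' < length ys" "\<forall>i\<le>m'. ys!i = (p^^i) x"
     "\<forall>d. m' + d < length ys \<longrightarrow> ys!(length ys - 1 - d) = (p^^d) y"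
     "h x = h (ys!m') + m'" "h y = h (ys!m') + (length ys - 1 - m')"
    using path_shape[OF ps P2] by blast
  have d1: "distinct xs" "distinct ys" using P1 P2 by (auto simp: is_path_def)
  have eq: "m = m' \<and> length xs = length ys"
  proof (cases "m \<le> m'")
    case True
    show ?thesis using shape_aux[OF m(1) m'(1) m(2,3,4,5) m'(2,3,4,5) d1(2) refl True] .
  next
    case False
    show ?thesis using shape_aux[OF m'(1) m(1) m'(2,3,4,5) m(2,3,4,5) d1(1) refl] False by simp
  qed
  show ?thesis
  proof (rule nth_equalityI)
    show "length xs = length ys" using eq by simp
    fix i assume i: "i < length xs"
    show "xs!i = ys!i"
    proof (cases "i \<le> m")
      case True then show ?thesis using m(2) m'(2) eq by simp
    next
      case False
      define d where "d = length xs - 1 - i"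
      have "i = length xs - 1 - d" "m + d < length xs" using False i unfolding d_def by auto
      then show ?thesis using m(3) m'(3) eq by metis
    qed
  qed
qed

lemma walk_to_path:
  assumes "successively R xs" "xs \<noteq> []"
  shows "\<exists>ys. ys \<noteq> [] \<and> hd ys = hd xs \<and> last ys = last xs \<and> distinct ys \<and> set ys \<subseteq> set xs
     \<and> successively R ys"
  using assms
proof (induction xs)
  case Nil then show ?case by simp
next
  case (Cons x xs)
  show ?case
  proof (cases "xs = []")
    case True then show ?thesis by (intro exI[of _ "[x]"]) auto
  next
    case False
    then have sx: "successively R xs" "R x (hd xs)" using Cons.prems by (auto simp: successively_Cons)
    obtain ys where ys: "ys \<noteq> []" "hd ys = hd xs" "last ys = last xs" "distinct ys" "set ys \<subseteq> set xs"
      "successively R ys" using Cons.IH[OF sx(1) False] by blast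
    show ?thesis
    proof (cases "x \<in> set ys")
      case True
      then obtain y1 y2 where sp: "ys = y1 @ x # y2" by (meson split_list)
      have "successively R (x # y2)" using ys(6) sp by (simp add: successively_append_iff)
      moreover have "last (x # y2) = last ys" using sp by simp
      ultimately show ?thesis using ys sp False
        by (intro exI[of _ "x # y2"]) auto
    next
      case False
      then show ?thesis using ys sx \<open>xs \<noteq> []\<close>
        by (intro exI[of _ "x # ys"]) (auto simp: successively_Cons)
    qed
  qed
qed

lemma walk_to_root:
  assumes ps: "pstruct V E r p h"
  shows "v \<in> V \<Longrightarrow> \<exists>xs. xs \<noteq> [] \<and> hd xs = v \<and> last xs = r \<and> set xs \<subseteq> V \<and> successively (\<lambda>a b. (a,b) \<in> E) xs"
proof (induction "h v" arbitrary: v rule: less_induct)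
  case less
  show ?case
  proof (cases "v = r")
    case True then show ?thesis using ps_root[OF ps] by (intro exI[of _ "[r]"]) auto
  next
    case False
    have pv: "p v \<in> V" "(v, p v) \<in> E" "Suc (h (p v)) = h v" using ps_par[OF ps less.prems False] by auto
    obtain xs where xs: "xs \<noteq> []" "hd xs = p v" "last xs = r" "set xs \<subseteq> V" "successively (\<lambda>a b. (a,b) \<in> E) xs"
      using less.hyps[of "p v"] pv by auto
    show ?thesis using xs pv less.prems by (intro exI[of _ "v # xs"]) (auto simp: successively_Cons)
  qed
qed

lemma ps_path_exists:
  assumes ps: "pstruct V E r p h" and x: "x \<in> V" and y: "y \<in> V"
  shows "\<exists>xs. is_path V E xs x y"
proof -
  have g: "graph V E" using ps_graph[OF ps] .
  obtain xs where xs: "xs \<noteq> []" "hd xs = x" "last xs = r" "set xs \<subseteq> V" "successively (\<lambda>a b. (a,b) \<in> E) xs"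
    using walk_to_root[OF ps x] by blast
  obtain ys where ys: "ys \<noteq> []" "hd ys = y" "last ys = r" "set ys \<subseteq> V" "successively (\<lambda>a b. (a,b) \<in> E) ys"
    using walk_to_root[OF ps y] by blast
  have sym: "successively (\<lambda>a b. (a,b) \<in> E) (rev ys)"
    using ys(5) by (simp add: successively_mono graph_sym[OF g])
  have rr: "(r, r) \<in> E" using graph_refl[OF g ps_root[OF ps]] .
  define ws where "ws = xs @ rev ys"
  have w: "successively (\<lambda>a b. (a,b) \<in> E) ws" "ws \<noteq> []" "hd ws = x" "last ws = y" "set ws \<subseteq> V"
    using xs ys sym rr unfolding ws_def by (auto simp: successively_append_iff hd_rev last_rev)
  obtain zs where "zs \<noteq> []" "hd zs = hd ws" "last zs = last ws" "distinct zs" "set zs \<subseteq> set ws"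
     "successively (\<lambda>a b. (a,b) \<in> E) zs" using walk_to_path[OF w(1,2)] by blast
  then show ?thesis using w unfolding is_path_succ by (intro exI[of _ zs]) auto
qed

lemma ps_tree: assumes ps: "pstruct V E r p h" shows "rooted_tree V E r"
  unfolding rooted_tree_def tree_def
  using ps_graph[OF ps] ps_finite[OF ps] ps_root[OF ps] ps_path_exists[OF ps] path_unique[OF ps]
  by blast

lemma ps_tree_le:
  assumes ps: "pstruct V E r p h" and y: "y \<in> V"
  shows "tree_le V E r x y \<longleftrightarrow> (\<exists>j\<le>h y. x = (p^^j) y)"
proof -
  obtain xs where P: "is_path V E xs r y" using ps_path_exists[OF ps ps_root[OF ps] y] by blast
  obtain m where m: "m < length xs" "\<forall>i\<le>m. xs!i = (p^^i) r"
     "\<forall>d. m + d < length xs \<longrightarrow> xs!(length xs - 1 - d) = (p^^d) y"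
     "h r = h (xs!m) + m" "h y = h (xs!m) + (length xs - 1 - m)"
    using path_shape[OF ps P] by blast
  have m0: "m = 0" using m(4) ps_h0[OF ps] by simp
  have hy: "h y = length xs - 1" using m(5) m(4) m0 ps_h0[OF ps] by simp
  have set: "set xs = {(p^^j) y | j. j \<le> h y}"
  proof
    show "set xs \<subseteq> {(p^^j) y | j. j \<le> h y}"
    proof
      fix z assume "z \<in> set xs"
      then obtain i where i: "i < length xs" "z = xs!i" by (metis in_set_conv_nth)
      define d where "d = length xs - 1 - i"
      have "i = length xs - 1 - d" "m + d < length xs" using i m0 unfolding d_def by auto
      then have "z = (p^^d) y" using m(3) i by metis
      then show "z \<in> {(p^^j) y | j. j \<le> h y}" using hy d_def by auto
    qed
  next
    show "{(p^^j) y | j. j \<le> h y} \<subseteq> set xs"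
    proof
      fix z assume "z \<in> {(p^^j) y | j. j \<le> h y}"
      then obtain j where j: "j \<le> h y" "z = (p^^j) y" by blast
      have "j < length xs" using j hy m(1) by linarith
      then have "xs!(length xs - 1 - j) = z" using m(3) m0 j by simp
      moreover have "length xs - 1 - j < length xs" using m(1) by simp
      ultimately show "z \<in> set xs" by (metis nth_mem)
    qed
  qed
  have "tree_le V E r x y \<longleftrightarrow> x \<in> set xs"
    unfolding tree_le_def using path_unique[OF ps P] P by blast
  then show ?thesis using set by blast
qed

lemma distinct_hd_last: "distinct xs \<Longrightarrow> xs \<noteq> [] \<Longrightarrow> hd xs = last xs \<Longrightarrow> xs = [hd xs]"
  by (cases xs) (auto split: if_splits)

lemma tree_root_path:
  assumes T: "rooted_tree V E r" and y: "y \<in> V"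
  shows "\<exists>!xs. is_path V E xs r y"
proof (cases "y = r")
  case True
  have "is_path V E [r] r y" using True y by (simp add: is_path_def)
  moreover have "xs = [r]" if "is_path V E xs r y" for xs
    using that True distinct_hd_last[of xs] by (auto simp: is_path_def)
  ultimately show ?thesis by blast
next
  case False
  then show ?thesis using T y by (auto simp: rooted_tree_def tree_def)
qed

lemma tree_ps:
  assumes T: "rooted_tree V E r"
  shows "\<exists>p h. pstruct V E r p h"
proof -
  have g: "graph V E" and fin: "finite V" and rV: "r \<in> V" using T by (auto simp: rooted_tree_def tree_def)
  define P where "P y = (THE xs. is_path V E xs r y)" for y
  have PP: "is_path V E (P y) r y" if "y \<in> V" for y
    unfolding P_def using theI'[OF tree_root_path[OF T that]] .
  have PU: "xs = P y" if "y \<in> V" "is_path V E xs r y" for xs y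
    using tree_root_path[OF T that(1)] PP[OF that(1)] that(2) by blast
  define h where "h y = length (P y) - 1" for y
  define p where "p y = last (butlast (P y))" for y
  have Pr: "P r = [r]" using PU[OF rV, of "[r]"] rV by (simp add: is_path_def)
  have h0: "h r = 0" using Pr h_def by simp
  have par: "p x \<in> V \<and> (x, p x) \<in> E \<and> Suc (h (p x)) = h x \<and> P (p x) = butlast (P x)"
    if x: "x \<in> V" "x \<noteq> r" for x
  proof -
    have Px: "P x \<noteq> []" "hd (P x) = r" "last (P x) = x" "distinct (P x)" "set (P x) \<subseteq> V"
       "successively (\<lambda>a b. (a,b) \<in> E) (P x)" using PP[OF x(1)] by (auto simp: is_path_succ)
    have len: "length (P x) \<ge> 2"
    proof (rule ccontr)
      assume "\<not> length (P x) \<ge> 2"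
      then have "length (P x) = 1" using Px(1) by (cases "P x") (auto simp: not_le)
      then have "hd (P x) = last (P x)" by (cases "P x") auto
      then show False using Px x by simp
    qed
    define B where "B = butlast (P x)"
    have Bx: "P x = B @ [x]" using Px(1,3) unfolding B_def by (metis append_butlast_last_id)
    have Bne: "B \<noteq> []" using len Bx by auto
    have hB: "hd B = r" using Px(2) Bx Bne by simp
    have pB: "p x = last B" using p_def B_def by simp
    have sB: "successively (\<lambda>a b. (a,b) \<in> E) B" "(last B, x) \<in> E"
      using Px(6) Bx Bne by (auto simp: successively_append_iff)
    have BV: "set B \<subseteq> V" "distinct B" using Px Bx by auto
    have pV: "p x \<in> V" using pB BV Bne by auto
    have BP: "is_path V E B r (p x)" using Bne hB pB BV sB by (simp add: is_path_succ)
    have "B = P (p x)" using PU[OF pV BP] .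
    then show ?thesis using pV sB(2) pB graph_sym[OF g] len Bx unfolding h_def B_def
      by auto
  qed
  have edge: "u = v \<or> (u \<noteq> r \<and> v = p u) \<or> (v \<noteq> r \<and> u = p v)" if uv: "(u,v) \<in> E" for u v
  proof (rule ccontr)
    assume neg: "\<not> ?thesis"
    have uV: "u \<in> V" and vV: "v \<in> V" using graph_in[OF g uv] by auto
    have vu: "(v,u) \<in> E" using graph_sym[OF g uv] .
    define xs where "xs = P u"
    have Px: "xs \<noteq> []" "hd xs = r" "last xs = u" "distinct xs" "set xs \<subseteq> V"
       "successively (\<lambda>a b. (a,b) \<in> E) xs" using PP[OF uV] unfolding xs_def by (auto simp: is_path_succ)
    show False
    proof (cases "v \<in> set xs")
      case False
      have "is_path V E (xs @ [v]) r v" using Px False vV uv by (auto simp: is_path_succ successively_append_iff)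
      then have e: "P v = xs @ [v]" using PU[OF vV] by simp
      have "v \<noteq> r" using False Px(1,2) hd_in_set by metis
      moreover have "p v = u" using e Px(3) p_def by simp
      ultimately show False using neg by simp
    next
      case True
      then obtain ys zs where sp: "xs = ys @ v # zs" by (meson split_list)
      have zne: "zs \<noteq> []" using sp Px(3) neg by auto
      have lz: "last zs = u" using sp Px(3) zne by simp
      have ur: "u \<noteq> r"
      proof
        assume "u = r"
        then have "xs = [r]" using Pr xs_def by simp
        then show False using True neg \<open>u = r\<close> by simp
      qed
      show False
      proof (cases "zs = [u]")
        case True
        have "p u = v" using sp True p_def xs_def by (simp add: butlast_append)
        then show False using neg ur by simp
      next
        case False
        have uz: "u \<in> set zs" using lz zne by auto
        have d: "distinct (ys @ [v, u])" using Px(4) sp uz neg by auto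
        have s: "successively (\<lambda>a b. (a,b) \<in> E) (ys @ [v, u])"
          using Px(6) sp vu zne by (auto simp: successively_append_iff successively_Cons)
        have "hd (ys @ [v, u]) = r" using Px(2) sp by (cases ys) auto
        then have "is_path V E (ys @ [v, u]) r u" using d s Px(5) sp uV
          by (auto simp: is_path_succ)
        then have "ys @ [v, u] = xs" using PU[OF uV] xs_def by simp
        then show False using sp False by simp
      qed
    qed
  qed
  have "pstruct V E r p h" unfolding pstruct_def using g fin rV h0 par edge by blast
  then show ?thesis by blast
qed

lemma conn_no_split:
  assumes "connected_set E K" "P \<noteq> {}" "Q \<noteq> {}" "P \<inter> Q = {}" "P \<union> Q = K" "\<forall>p\<in>P. \<forall>q\<in>Q. (p,q) \<notin> E"
  shows False
proof -
  have ex: "\<exists>P' Q'. P' \<noteq> {} \<and> Q' \<noteq> {} \<and> P' \<inter> Q' = {} \<and> P' \<union> Q' = K \<and> (\<forall>p\<in>P'. \<forall>q\<in>Q'. (p, q) \<notin> E)"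
    apply (rule exI[of _ P])
    apply (rule exI[of _ Q])
    using assms(2-6) by (simp only: simp_thms)
  have c: "\<not> (\<exists>P' Q'. P' \<noteq> {} \<and> Q' \<noteq> {} \<and> P' \<inter> Q' = {} \<and> P' \<union> Q' = K \<and> (\<forall>p\<in>P'. \<forall>q\<in>Q'. (p, q) \<notin> E))"
    using assms(1) unfolding connected_set_def .
  show False using c ex by (rule notE)
qed

lemma conn_intro:
  assumes "\<And>P Q. P \<noteq> {} \<Longrightarrow> Q \<noteq> {} \<Longrightarrow> P \<inter> Q = {} \<Longrightarrow> P \<union> Q = K \<Longrightarrow> \<forall>p\<in>P. \<forall>q\<in>Q. (p,q) \<notin> E \<Longrightarrow> False"
  shows "connected_set E K"
  unfolding connected_set_def
proof
  assume "\<exists>P Q. P \<noteq> {} \<and> Q \<noteq> {} \<and> P \<inter> Q = {} \<and> P \<union> Q = K \<and> (\<forall>p\<in>P. \<forall>q\<in>Q. (p, q) \<notin> E)"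
  then obtain P Q where "P \<noteq> {}" "Q \<noteq> {}" "P \<inter> Q = {}" "P \<union> Q = K" "\<forall>p\<in>P. \<forall>q\<in>Q. (p, q) \<notin> E"
    by blast
  then show False using assms by blast
qed

lemma conn_split:
  assumes "connected_set E K" "K \<subseteq> P \<union> Q" "P \<inter> Q = {}" "\<forall>p\<in>P. \<forall>q\<in>Q. (p,q) \<notin> E"
  shows "K \<subseteq> P \<or> K \<subseteq> Q"
proof (rule ccontr)
  assume "\<not> ?thesis"
  then have a: "P \<inter> K \<noteq> {}" "Q \<inter> K \<noteq> {}" using assms(2) by auto
  have b1: "(P \<inter> K) \<inter> (Q \<inter> K) = {}" using assms(3) by auto
  have b2: "(P \<inter> K) \<union> (Q \<inter> K) = K" using assms(2) by auto
  have b3: "\<forall>p\<in>P \<inter> K. \<forall>q\<in>Q \<inter> K. (p,q) \<notin> E" using assms(4) by auto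
  show False using conn_no_split[OF assms(1) a b1 b2 b3] .
qed

lemma conn_single: "connected_set E {a}"
proof (rule conn_intro)
  fix P Q assume PQ: "P \<noteq> {}" "Q \<noteq> {}" "P \<inter> Q = {}" "P \<union> Q = {a}"
  then have "P \<subseteq> {a}" "Q \<subseteq> {a}" by auto
  then have "P = {a}" "Q = {a}" using PQ by auto
  then show False using PQ by auto
qed

lemma conn_insert:
  assumes K: "connected_set E K" and k: "k \<in> K" and e1: "(k,k') \<in> E" and e2: "(k',k) \<in> E"
  shows "connected_set E (insert k' K)"
proof (rule conn_intro)
  fix P Q assume PQ: "P \<noteq> {}" "Q \<noteq> {}" "P \<inter> Q = {}" "P \<union> Q = insert k' K" "\<forall>p\<in>P. \<forall>q\<in>Q. (p, q) \<notin> E"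
  have "K \<subseteq> P \<union> Q" using PQ(4) by auto
  then have "K \<subseteq> P \<or> K \<subseteq> Q" using conn_split[OF K _ PQ(3) PQ(5)] by blast
  then show False
  proof
    assume KP: "K \<subseteq> P"
    obtain q where q: "q \<in> Q" using PQ(2) by blast
    have "q \<notin> P" using q PQ(3) by auto
    then have "q = k'" using q PQ(4) KP by auto
    then show False using PQ(5) e1 k KP q by blast
  next
    assume KQ: "K \<subseteq> Q"
    obtain q where q: "q \<in> P" using PQ(1) by blast
    have "q \<notin> Q" using q PQ(3) by auto
    then have "q = k'" using q PQ(4) KQ by auto
    then show False using PQ(5) e2 k KQ q by blast
  qed
qed

lemma conn_pair:
  "(a,b) \<in> E \<Longrightarrow> (b,a) \<in> E \<Longrightarrow> connected_set E {a, b}"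
  using conn_insert[OF conn_single[of E b], of b a] by simp

lemma conn_union:
  assumes K: "connected_set E K" and L: "connected_set E L" and KL: "K \<inter> L \<noteq> {}"
  shows "connected_set E (K \<union> L)"
proof (rule conn_intro)
  fix P Q assume PQ: "P \<noteq> {}" "Q \<noteq> {}" "P \<inter> Q = {}" "P \<union> Q = K \<union> L" "\<forall>p\<in>P. \<forall>q\<in>Q. (p, q) \<notin> E"
  have "K \<subseteq> P \<union> Q" "L \<subseteq> P \<union> Q" using PQ(4) by auto
  then have a: "K \<subseteq> P \<or> K \<subseteq> Q" and b: "L \<subseteq> P \<or> L \<subseteq> Q"
    using conn_split[OF K _ PQ(3) PQ(5)] conn_split[OF L _ PQ(3) PQ(5)] by blast+
  obtain x where x: "x \<in> K" "x \<in> L" using KL by blast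
  have "K \<union> L \<subseteq> P \<or> K \<union> L \<subseteq> Q" using a b x PQ(3) by blast
  then show False using PQ(1,2,3,4) by blast
qed

lemma conn_image:
  assumes S: "connected_set E1 S" and F: "\<forall>x\<in>S. \<forall>y\<in>S. (x,y) \<in> E1 \<longrightarrow> (F x, F y) \<in> E2"
  shows "connected_set E2 (F ` S)"
proof (rule conn_intro)
  fix P Q assume PQ: "P \<noteq> {}" "Q \<noteq> {}" "P \<inter> Q = {}" "P \<union> Q = F ` S" "\<forall>p\<in>P. \<forall>q\<in>Q. (p, q) \<notin> E2"
  define P' where "P' = {x\<in>S. F x \<in> P}"
  define Q' where "Q' = {x\<in>S. F x \<in> Q}"
  have h1: "S \<subseteq> P' \<union> Q'" using PQ(4) unfolding P'_def Q'_def by blast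
  have h2: "P' \<inter> Q' = {}" using PQ(3) unfolding P'_def Q'_def by blast
  have h3: "\<forall>p\<in>P'. \<forall>q\<in>Q'. (p,q) \<notin> E1" using PQ(5) F unfolding P'_def Q'_def by blast
  have "S \<subseteq> P' \<or> S \<subseteq> Q'" using conn_split[OF S h1 h2 h3] .
  then have "F ` S \<subseteq> P \<or> F ` S \<subseteq> Q" unfolding P'_def Q'_def by blast
  then show False using PQ(1,2,3,4) by blast
qed

lemma component_exists:
  assumes "finite S" "s \<in> S"
  shows "\<exists>K. component_of E S K \<and> s \<in> K"
proof -
  define C where "C = {K. K \<subseteq> S \<and> connected_set E K \<and> s \<in> K}"
  have fin: "finite C" unfolding C_def apply (rule finite_subset[of _ "Pow S"]) 
    apply blast using assms(1) by simp
  have ne: "{s} \<in> C" using assms(2) conn_single[of E s] unfolding C_def by simp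
  have Cne: "C \<noteq> {}" using ne by blast
  obtain K where K: "K \<in> C" "\<forall>b\<in>C. K \<le> b \<longrightarrow> K = b" using finite_has_maximal[OF fin Cne] by (elim bexE) simp
  have K1: "K \<subseteq> S" "connected_set E K" "s \<in> K" using K(1) unfolding C_def by auto
  have K2: "\<forall>K'. K \<subseteq> K' \<and> K' \<subseteq> S \<and> connected_set E K' \<longrightarrow> K' = K"
  proof (intro allI impI)
    fix K' assume "K \<subseteq> K' \<and> K' \<subseteq> S \<and> connected_set E K'"
    then have "K' \<in> C" "K \<le> K'" using K1 unfolding C_def by auto
    then show "K' = K" using K(2) by auto
  qed
  have "component_of E S K" unfolding component_of_def using K1 K2 by blast
  then show ?thesis using K1 by blast
qed

lemma component_absorb:
  assumes K: "component_of E S K" and L: "connected_set E L" "L \<subseteq> S" and KL: "K \<inter> L \<noteq> {}"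
  shows "L \<subseteq> K"
proof -
  have K1: "K \<subseteq> S" "connected_set E K" "\<forall>K'. K \<subseteq> K' \<and> K' \<subseteq> S \<and> connected_set E K' \<longrightarrow> K' = K"
    using K unfolding component_of_def by auto
  have "connected_set E (K \<union> L)" using conn_union[OF K1(2) L(1) KL] .
  moreover have "K \<subseteq> K \<union> L" "K \<union> L \<subseteq> S" using K1(1) L(2) by auto
  ultimately have "K \<union> L = K" using K1(3) by blast
  then show ?thesis by blast
qed

lemma component_ne:
  assumes K: "component_of E S K" and S: "S \<noteq> {}" shows "K \<noteq> {}"
proof
  assume K0: "K = {}"
  obtain s where s: "s \<in> S" using S by blast
  have K1: "\<forall>K'. K \<subseteq> K' \<and> K' \<subseteq> S \<and> connected_set E K' \<longrightarrow> K' = K"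
    using K unfolding component_of_def by auto
  have "K \<subseteq> {s} \<and> {s} \<subseteq> S \<and> connected_set E {s}" using K0 s conn_single[of E s] by simp
  then have "{s} = K" using K1 by blast
  then show False using K0 by simp
qed

lemma gen_confluent:
  assumes surj: "F ` V1 = V2"
    and loc: "\<And>v w. v \<in> V1 \<Longrightarrow> (F v, w) \<in> E2 \<Longrightarrow>
       \<exists>L. L \<subseteq> V1 \<and> connected_set E1 L \<and> v \<in> L \<and> F ` L \<subseteq> {F v, w} \<and> w \<in> F ` L"
  shows "confluent V1 E1 V2 E2 F"
  unfolding confluent_def
proof (intro allI impI)
  fix Q K assume Q: "Q \<subseteq> V2 \<and> connected_set E2 Q" and K: "component_of E1 {v \<in> V1. F v \<in> Q} K"
  define S where "S = {v \<in> V1. F v \<in> Q}"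
  have KS: "K \<subseteq> S" using K unfolding S_def component_of_def by simp
  have sub: "F ` K \<subseteq> Q" using KS unfolding S_def by auto
  show "F ` K = Q"
  proof (cases "Q = {}")
    case True then show ?thesis using sub by simp
  next
    case False
    then obtain q0 where q0: "q0 \<in> Q" by blast
    then obtain v0 where "v0 \<in> V1" "F v0 = q0" using Q surj by (metis imageE subsetD)
    then have "S \<noteq> {}" using q0 unfolding S_def by auto
    then have Kne: "K \<noteq> {}" using component_ne K unfolding S_def by blast
    show ?thesis
    proof (rule ccontr)
      assume neq: "F ` K \<noteq> Q"
      have "\<exists>p\<in>F ` K. \<exists>q\<in>Q - F ` K. (p, q) \<in> E2"
      proof (rule ccontr)
        assume "\<not> ?thesis"
        then have c: "\<forall>p\<in>F ` K. \<forall>q\<in>Q - F ` K. (p, q) \<notin> E2" by simp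
        have c1: "F ` K \<noteq> {}" using Kne by simp
        have c2: "Q - F ` K \<noteq> {}" using neq sub by blast
        have c3: "F ` K \<inter> (Q - F ` K) = {}" by blast
        have c4: "F ` K \<union> (Q - F ` K) = Q" using sub by blast
        show False using conn_no_split[OF conjunct2[OF Q] c1 c2 c3 c4 c] .
      qed
      then obtain p q where pq: "p \<in> F ` K" "q \<in> Q" "q \<notin> F ` K" "(p, q) \<in> E2" by blast
      then obtain v where v: "v \<in> K" "p = F v" by blast
      have vV: "v \<in> V1" using v(1) KS unfolding S_def by auto
      have e: "(F v, q) \<in> E2" using pq(4) v(2) by simp
      from loc[OF vV e] obtain L where L0: "L \<subseteq> V1 \<and> connected_set E1 L \<and> v \<in> L \<and> F ` L \<subseteq> {F v, q} \<and> q \<in> F ` L"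
        by (elim exE)
      have L: "L \<subseteq> V1" "connected_set E1 L" "v \<in> L" "F ` L \<subseteq> {F v, q}" "q \<in> F ` L"
        using L0 by simp_all
      have "F v \<in> Q" using v(1) sub by blast
      have "L \<subseteq> S"
      proof
        fix x assume x: "x \<in> L"
        then have "F x \<in> {F v, q}" using L(4) by blast
        then have "F x \<in> Q" using \<open>F v \<in> Q\<close> pq(2) by auto
        then show "x \<in> S" using x L(1) unfolding S_def by auto
      qed
      moreover have "K \<inter> L \<noteq> {}" using L(3) v(1) by blast
      ultimately have "L \<subseteq> K" using component_absorb[OF K[folded S_def] L(2)] by blast
      then show False using L(5) pq(3) by blast
    qed
  qed
qed

lemma epi_step:
  assumes ps1: "pstruct V1 E1 r1 p1 h1" and ps2: "pstruct V2 E2 r2 p2 h2"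
    and F: "epimorphism V1 E1 r1 V2 E2 r2 F" and b: "b \<in> V1" "b \<noteq> r1"
  shows "F (p1 b) = F b \<or> (F b \<noteq> r2 \<and> F (p1 b) = p2 (F b))"
proof -
  have pb: "p1 b \<in> V1" "(b, p1 b) \<in> E1" "Suc (h1 (p1 b)) = h1 b" using ps_par[OF ps1 b] by auto
  have img: "F ` V1 = V2" and ed: "\<And>a c. (a,c) \<in> E1 \<Longrightarrow> (F a, F c) \<in> E2"
    and ord: "\<forall>a\<in>V1. \<forall>c\<in>V1. tree_le V1 E1 r1 a c \<longrightarrow> tree_le V2 E2 r2 (F a) (F c)"
    using F unfolding epimorphism_def by auto
  have FV: "F b \<in> V2" "F (p1 b) \<in> V2" using img b pb by auto
  have e: "(F b, F (p1 b)) \<in> E2" using ed[OF pb(2)] .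
  have "\<exists>j\<le>h1 b. p1 b = (p1^^j) b"
    by (rule exI[of _ 1]) (use pb(3) in simp)
  then have le1: "tree_le V1 E1 r1 (p1 b) b" using ps_tree_le[OF ps1 b(1), of "p1 b"] by simp
  have "tree_le V2 E2 r2 (F (p1 b)) (F b)" using ord b pb le1 by blast
  then obtain j where j: "j \<le> h2 (F b)" "F (p1 b) = (p2^^j) (F b)" using ps_tree_le[OF ps2 FV(1)] by blast
  have hj: "h2 (F (p1 b)) = h2 (F b) - j" using ps_funpow[OF ps2 FV(1) j(1)] j(2) by simp
  show ?thesis
  proof (rule ccontr)
    assume neg: "\<not> ?thesis"
    then have "F (p1 b) \<noteq> r2 \<and> F b = p2 (F (p1 b))" using ps_edge[OF ps2 e] by auto
    then have "Suc (h2 (F b)) = h2 (F (p1 b))" using ps_par[OF ps2 FV(2)] by auto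
    then show False using hj by simp
  qed
qed

lemma lightD: "light V E F \<Longrightarrow> a \<in> V \<Longrightarrow> c \<in> V \<Longrightarrow> (a,c) \<in> E \<Longrightarrow> a \<noteq> c \<Longrightarrow> F a \<noteq> F c"
  unfolding light_def by (elim ballE) auto

lemma light_step:
  assumes ps1: "pstruct V1 E1 r1 p1 h1" and ps2: "pstruct V2 E2 r2 p2 h2"
    and F: "epimorphism V1 E1 r1 V2 E2 r2 F" and L: "light V1 E1 F" and b: "b \<in> V1" "b \<noteq> r1"
  shows "F b \<noteq> r2 \<and> F (p1 b) = p2 (F b)"
proof -
  have pb: "p1 b \<in> V1" "(b, p1 b) \<in> E1" "p1 b \<noteq> b" using ps_par[OF ps1 b] ps_par_ne[OF ps1 b] by auto
  have "F b \<noteq> F (p1 b)" using lightD[OF L b(1) pb(1) pb(2)] pb(3) by auto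
  then show ?thesis using epi_step[OF ps1 ps2 F b] by auto
qed

lemma epi_order:
  assumes ps1: "pstruct V1 E1 r1 p1 h1" and ps2: "pstruct V2 E2 r2 p2 h2"
    and FV: "\<And>x. x \<in> V1 \<Longrightarrow> F x \<in> V2"
    and st: "\<And>b. b \<in> V1 \<Longrightarrow> b \<noteq> r1 \<Longrightarrow> F (p1 b) = F b \<or> (F b \<noteq> r2 \<and> F (p1 b) = p2 (F b))"
  shows "\<forall>a\<in>V1. \<forall>b\<in>V1. tree_le V1 E1 r1 a b \<longrightarrow> tree_le V2 E2 r2 (F a) (F b)"
proof (intro ballI impI)
  fix a b assume a: "a \<in> V1" and b: "b \<in> V1" and le: "tree_le V1 E1 r1 a b"
  obtain j where j: "j \<le> h1 b" "a = (p1^^j) b" using ps_tree_le[OF ps1 b] le by blast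
  have Fb: "F b \<in> V2" using FV b by simp
  have "\<exists>k\<le>h2 (F b). F ((p1^^j) b) = (p2^^k) (F b)" using j(1)
  proof (induction j)
    case 0 then show ?case by (intro exI[of _ 0]) simp
  next
    case (Suc j)
    then obtain k where k: "k \<le> h2 (F b)" "F ((p1^^j) b) = (p2^^k) (F b)" by auto
    define z where "z = (p1^^j) b"
    have z: "z \<in> V1" "h1 z = h1 b - j" using ps_funpow[OF ps1 b, of j] Suc.prems z_def by auto
    have zr: "z \<noteq> r1" using z Suc.prems ps_h0[OF ps1] by auto
    have hk: "h2 (F z) = h2 (F b) - k" using ps_funpow[OF ps2 Fb k(1)] k(2) z_def by simp
    have FzV: "F z \<in> V2" using FV z by simp
    from st[OF z(1) zr] show ?case
    proof
      assume "F (p1 z) = F z"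
      then show ?case using k z_def by (intro exI[of _ k]) simp
    next
      assume as: "F z \<noteq> r2 \<and> F (p1 z) = p2 (F z)"
      then have "h2 (F z) \<noteq> 0" using ps_h_root[OF ps2 FzV] by auto
      then have "Suc k \<le> h2 (F b)" using hk by simp
      then show ?case using as k z_def by (intro exI[of _ "Suc k"]) simp
    qed
  qed
  then show "tree_le V2 E2 r2 (F a) (F b)" using ps_tree_le[OF ps2 Fb] j(2) by blast
qed

lemma light_conf_local:
  assumes g1: "graph V1 E1" and fin: "finite V1" and g2: "graph V2 E2"
    and F: "epimorphism V1 E1 r1 V2 E2 r2 F" and L: "light V1 E1 F" and C: "confluent V1 E1 V2 E2 F"
    and b: "b \<in> V1" and e: "(F b, a) \<in> E2"
  shows "\<exists>b'\<in>V1. (b, b') \<in> E1 \<and> F b' = a"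
proof (cases "a = F b")
  case True then show ?thesis using b graph_refl[OF g1 b] by blast
next
  case False
  have img: "F ` V1 = V2" using F unfolding epimorphism_def by auto
  define Q where "Q = {F b, a}"
  have QV: "Q \<subseteq> V2" using graph_in[OF g2 e] Q_def by auto
  have Qc: "connected_set E2 Q" unfolding Q_def using conn_pair e graph_sym[OF g2 e] by metis
  define S where "S = {v \<in> V1. F v \<in> Q}"
  obtain K where K: "component_of E1 S K" "b \<in> K" using component_exists[of S b E1] fin b S_def Q_def by auto
  have FK: "F ` K = Q" using C QV Qc K(1) unfolding confluent_def S_def by blast
  have "a \<in> F ` K" using FK unfolding Q_def by simp
  then obtain b'' where b'': "b'' \<in> K" "a = F b''" by (rule imageE)
  have KS: "K \<subseteq> S" using K(1) unfolding component_of_def by simp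
  show ?thesis
  proof (rule ccontr)
    assume neg: "\<not> ?thesis"
    have noe: "\<forall>q\<in>K - {b}. (b, q) \<notin> E1"
    proof (intro ballI notI)
      fix q assume q: "q \<in> K - {b}" and bq: "(b,q) \<in> E1"
      have qV: "q \<in> V1" "F q \<in> Q" using q KS S_def by auto
      show False
      proof (cases "F q = F b")
        case True then show False using lightD[OF L b qV(1) bq] q by auto
      next
        case False then show False using qV neg bq Q_def by auto
      qed
    qed
    have "b'' \<noteq> b" using b'' False by auto
    then have c2: "K - {b} \<noteq> {}" using b''(1) by blast
    have c4: "{b} \<union> (K - {b}) = K" using K(2) by blast
    have c5: "\<forall>p\<in>{b}. \<forall>q\<in>K - {b}. (p,q) \<notin> E1" using noe by simp
    have Kc: "connected_set E1 K" using K(1) unfolding component_of_def by simp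
    show False using conn_no_split[OF Kc _ c2 _ c4 c5] by simp
  qed
qed

lemma end_vertex_iff:
  assumes ps: "pstruct V E r p h"
  shows "end_vertex V E r v \<longleftrightarrow> (v \<in> V \<and> v \<noteq> r \<and> (\<forall>w\<in>V. w \<noteq> r \<longrightarrow> p w \<noteq> v))"
proof (cases "v \<in> V \<and> v \<noteq> r")
  case False then show ?thesis unfolding end_vertex_def by blast
next
  case True
  then have v: "v \<in> V" "v \<noteq> r" by auto
  have g: "graph V E" using ps_graph[OF ps] .
  define N where "N = {w \<in> V. w \<noteq> v \<and> (v, w) \<in> E}"
  have pv: "p v \<in> V" "(v, p v) \<in> E" "Suc (h (p v)) = h v" using ps_par[OF ps v] by auto
  have pvN: "p v \<in> N" using pv N_def by auto
  have finN: "finite N" using ps_finite[OF ps] N_def by simp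
  have c1: "card N = 1 \<longleftrightarrow> N \<subseteq> {p v}"
  proof
    assume "card N = 1"
    then obtain x where "N = {x}" using card_1_singletonE by blast
    then show "N \<subseteq> {p v}" using pvN by simp
  next
    assume "N \<subseteq> {p v}"
    then have "N = {p v}" using pvN by blast
    then show "card N = 1" by simp
  qed
  have c2: "N \<subseteq> {p v} \<longleftrightarrow> (\<forall>w\<in>V. w \<noteq> r \<longrightarrow> p w \<noteq> v)"
  proof
    assume sub: "N \<subseteq> {p v}"
    show "\<forall>w\<in>V. w \<noteq> r \<longrightarrow> p w \<noteq> v"
    proof (intro ballI impI notI)
      fix w assume w: "w \<in> V" "w \<noteq> r" "p w = v"
      have pw: "(w, p w) \<in> E" "Suc (h (p w)) = h w" using ps_par[OF ps w(1,2)] by auto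
      have "w \<in> N" using w pw graph_sym[OF g] N_def by auto
      then have "w = p v" using sub by auto
      then show False using pw pv w by simp
    qed
  next
    assume nc: "\<forall>w\<in>V. w \<noteq> r \<longrightarrow> p w \<noteq> v"
    show "N \<subseteq> {p v}"
    proof
      fix w assume "w \<in> N"
      then have w: "w \<in> V" "w \<noteq> v" "(v, w) \<in> E" using N_def by auto
      then show "w \<in> {p v}" using ps_edge[OF ps w(3)] nc by auto
    qed
  qed
  show ?thesis unfolding end_vertex_def vorder_def N_def[symmetric] using c1 c2 v by simp
qed

lemma epiD:
  assumes "epimorphism V1 E1 r1 V2 E2 r2 F"
  shows "F ` V1 = V2" "\<And>a b. (a,b) \<in> E1 \<Longrightarrow> (F a, F b) \<in> E2"
    "(\<lambda>(a, b). (F a, F b)) ` E1 = E2" "F r1 = r2"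
  using assms unfolding epimorphism_def by auto

lemma epiI:
  assumes "F ` V1 = V2" "\<And>a b. (a,b) \<in> E1 \<Longrightarrow> (F a, F b) \<in> E2"
    "(\<lambda>(a, b). (F a, F b)) ` E1 = E2" "F r1 = r2"
    "\<forall>a\<in>V1. \<forall>b\<in>V1. tree_le V1 E1 r1 a b \<longrightarrow> tree_le V2 E2 r2 (F a) (F b)"
  shows "epimorphism V1 E1 r1 V2 E2 r2 F"
  using assms unfolding epimorphism_def by auto

lemma confD:
  assumes "confluent V1 E1 V2 E2 F" "Q \<subseteq> V2" "connected_set E2 Q" "component_of E1 {v \<in> V1. F v \<in> Q} K"
  shows "F ` K = Q"
proof -
  have "\<forall>Q. Q \<subseteq> V2 \<and> connected_set E2 Q \<longrightarrow> (\<forall>K. component_of E1 {v \<in> V1. F v \<in> Q} K \<longrightarrow> F ` K = Q)"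
    using assms(1) unfolding confluent_def .
  then have "Q \<subseteq> V2 \<and> connected_set E2 Q \<longrightarrow> (\<forall>K. component_of E1 {v \<in> V1. F v \<in> Q} K \<longrightarrow> F ` K = Q)"
    by (rule spec)
  then have "\<forall>K. component_of E1 {v \<in> V1. F v \<in> Q} K \<longrightarrow> F ` K = Q" using assms(2,3) by simp
  then show ?thesis using assms(4) by simp
qed

theorem theorem5p16:
  fixes VA :: "'a set" and EA :: "('a \<times> 'a) set" and rA :: 'a
    and VB :: "'b set" and EB :: "('b \<times> 'b) set" and rB :: 'b
    and VC :: "'c set" and EC :: "('c \<times> 'c) set" and rC :: 'c
    and f :: "'b \<Rightarrow> 'a" and g :: "'c \<Rightarrow> 'a"
  assumes A: "rooted_tree VA EA rA"
    and B: "rooted_tree VB EB rB"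
    and C: "rooted_tree VC EC rC"
    and f_epi: "epimorphism VB EB rB VA EA rA f"
    and f_light: "light VB EB f"
    and f_conf: "confluent VB EB VA EA f"
    and g_epi: "epimorphism VC EC rC VA EA rA g"
    and g_conf: "confluent VC EC VA EA g"
  defines "VD \<equiv> {(b, c). b \<in> VB \<and> c \<in> VC \<and> f b = g c}"
    and "ED \<equiv> {((b, c), (b', c')). b \<in> VB \<and> c \<in> VC \<and> f b = g c \<and> b' \<in> VB \<and> c' \<in> VC \<and> f b' = g c'
         \<and> (b, b') \<in> EB \<and> (c, c') \<in> EC}"
    and "rD \<equiv> (rB, rC)"
  shows "rooted_tree VD ED rD
    \<and> epimorphism VD ED rD VB EB rB fst \<and> confluent VD ED VB EB fst
    \<and> epimorphism VD ED rD VC EC rC snd \<and> light VD ED snd \<and> confluent VD ED VC EC snd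
    \<and> (\<forall>x\<in>VD. f (fst x) = g (snd x))
    \<and> (light VC EC g \<longrightarrow> light VD ED fst)
    \<and> (end_vertex_preserving VB EB rB VA EA rA f \<and> end_vertex_preserving VC EC rC VA EA rA g
         \<longrightarrow> end_vertex_preserving VD ED rD VB EB rB fst \<and> end_vertex_preserving VD ED rD VC EC rC snd)"
proof -
  obtain pA hA where psA: "pstruct VA EA rA pA hA" using tree_ps[OF A] by blast
  obtain pB hB where psB: "pstruct VB EB rB pB hB" using tree_ps[OF B] by blast
  obtain pC hC where psC: "pstruct VC EC rC pC hC" using tree_ps[OF C] by blast
  have gA: "graph VA EA" using ps_graph[OF psA] .
  have gB: "graph VB EB" using ps_graph[OF psB] .
  have gC: "graph VC EC" using ps_graph[OF psC] .
  have finB: "finite VB" using ps_finite[OF psB] .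
  have finC: "finite VC" using ps_finite[OF psC] .
  note fD = epiD[OF f_epi]
  note gD = epiD[OF g_epi]
  have fV: "f b \<in> VA" if "b \<in> VB" for b using fD(1) that by blast
  have gV: "g c \<in> VA" if "c \<in> VC" for c using gD(1) that by blast
  have FB: "f b \<noteq> rA \<and> f (pB b) = pA (f b)" if "b \<in> VB" "b \<noteq> rB" for b
    using light_step[OF psB psA f_epi f_light that] .
  have GC: "g (pC c) = g c \<or> (g c \<noteq> rA \<and> g (pC c) = pA (g c))" if "c \<in> VC" "c \<noteq> rC" for c
    using epi_step[OF psC psA g_epi that] .
  have LS: "\<exists>b'\<in>VB. (b, b') \<in> EB \<and> f b' = a" if "b \<in> VB" "(f b, a) \<in> EA" for b a
    using light_conf_local[OF gB finB gA f_epi f_light f_conf that] .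
  have fr: "b = rB" if "b \<in> VB" "f b = rA" for b
    using FB that by blast
  have flight: "f b \<noteq> f b'" if "b \<in> VB" "b' \<in> VB" "(b,b') \<in> EB" "b \<noteq> b'" for b b'
    using lightD[OF f_light that] .
  have VDm: "(b, c) \<in> VD \<longleftrightarrow> b \<in> VB \<and> c \<in> VC \<and> f b = g c" for b c
    unfolding VD_def by simp
  have EDm: "((b, c), (b', c')) \<in> ED \<longleftrightarrow> (b, c) \<in> VD \<and> (b', c') \<in> VD \<and> (b, b') \<in> EB \<and> (c, c') \<in> EC"
    for b c b' c' unfolding ED_def VD_def by auto
  define pD :: "'b \<times> 'c \<Rightarrow> 'b \<times> 'c" where "pD x = (if g (pC (snd x)) = g (snd x) then (fst x, pC (snd x)) else (pB (fst x), pC (snd x)))"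
    for x
  define hD :: "'b \<times> 'c \<Rightarrow> nat" where "hD x = hC (snd x)" for x
  have cne: "c \<noteq> rC" if "(b, c) \<in> VD" "(b, c) \<noteq> rD" for b c
  proof
    assume c: "c = rC"
    have "f b = rA" using that(1) c gD(4) unfolding VDm by simp
    then have "b = rB" using fr that(1) unfolding VDm by simp
    then show False using c that(2) unfolding rD_def by simp
  qed
  have parD: "pD (b, c) \<in> VD \<and> ((b, c), pD (b, c)) \<in> ED \<and> Suc (hD (pD (b, c))) = hD (b, c)
      \<and> (fst (pD (b, c)) = b \<or> (b \<noteq> rB \<and> fst (pD (b, c)) = pB b)) \<and> snd (pD (b, c)) = pC c"
    if x: "(b, c) \<in> VD" "(b, c) \<noteq> rD" for b c
  proof -
    have bc: "b \<in> VB" "c \<in> VC" "f b = g c" using x(1) unfolding VDm by auto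
    have c0: "c \<noteq> rC" using cne[OF x] .
    have pc: "pC c \<in> VC" "(c, pC c) \<in> EC" "Suc (hC (pC c)) = hC c" using ps_par[OF psC bc(2) c0] by auto
    show ?thesis
    proof (cases "g (pC c) = g c")
      case True
      then have e: "pD (b, c) = (b, pC c)" unfolding pD_def by simp
      have "(b, pC c) \<in> VD" using bc pc True unfolding VDm by simp
      moreover have "(b, b) \<in> EB" using graph_refl[OF gB bc(1)] .
      ultimately show ?thesis using e x(1) pc by (simp add: EDm hD_def)
    next
      case False
      then have e: "pD (b, c) = (pB b, pC c)" unfolding pD_def by simp
      have gc: "g c \<noteq> rA" "g (pC c) = pA (g c)" using GC[OF bc(2) c0] False by auto
      have b0: "b \<noteq> rB" using gc(1) bc(3) fD(4) by auto
      have pb: "pB b \<in> VB" "(b, pB b) \<in> EB" using ps_par[OF psB bc(1) b0] by auto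
      have "f (pB b) = g (pC c)" using FB[OF bc(1) b0] gc bc(3) by simp
      then have "(pB b, pC c) \<in> VD" using pb pc unfolding VDm by simp
      then show ?thesis using e x(1) pc pb b0 by (simp add: EDm hD_def)
    qed
  qed
  have key: "(b', c') = pD (b, c)"
    if v: "(b, c) \<in> VD" "(b', c') \<in> VD" "(b, b') \<in> EB" "c \<noteq> rC" "c' = pC c" for b c b' c'
  proof -
    have bc: "b \<in> VB" "c \<in> VC" "f b = g c" "b' \<in> VB" "c' \<in> VC" "f b' = g c'" using v unfolding VDm by auto
    show ?thesis
    proof (cases "g (pC c) = g c")
      case True
      have "f b = f b'" using True bc v(5) by simp
      then have "b = b'" using flight[OF bc(1) bc(4) v(3)] by blast
      then show ?thesis using True v(5) unfolding pD_def by simp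
    next
      case False
      have gc: "g c \<noteq> rA" "g c' = pA (g c)" using GC[OF bc(2) v(4)] False v(5) by auto
      have "g c \<noteq> g c'" using False v(5) by simp
      then have bb: "b \<noteq> b'" using bc by auto
      from ps_edge[OF psB v(3)] bb have "(b \<noteq> rB \<and> b' = pB b) \<or> (b' \<noteq> rB \<and> b = pB b')" by simp
      then show ?thesis
      proof
        assume "b \<noteq> rB \<and> b' = pB b"
        then show ?thesis using False v(5) unfolding pD_def by simp
      next
        assume as: "b' \<noteq> rB \<and> b = pB b'"
        have fb': "f b' \<noteq> rA" "f b = pA (f b')" using FB[OF bc(4)] as by auto
        have h1: "Suc (hA (pA (g c))) = hA (g c)" using ps_par[OF psA gV[OF bc(2)] gc(1)] by simp
        have h2: "Suc (hA (pA (g c'))) = hA (g c')" using ps_par[OF psA gV[OF bc(5)]] fb'(1) bc(6) by simp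
        have "pA (g c') = g c" using fb' bc by simp
        then show ?thesis using h1 h2 gc(2) by simp
      qed
    qed
  qed
  have psD: "pstruct VD ED rD pD hD"
    unfolding pstruct_def
  proof (intro conjI)
    show "graph VD ED" unfolding graph_def
    proof (intro conjI allI impI ballI)
      show "ED \<subseteq> VD \<times> VD" unfolding ED_def VD_def by auto
    next
      fix v assume "v \<in> VD"
      then show "(v, v) \<in> ED" unfolding ED_def VD_def using graph_refl[OF gB] graph_refl[OF gC] by auto
    next
      fix x y assume "(x, y) \<in> ED"
      then show "(y, x) \<in> ED" unfolding ED_def using graph_sym[OF gB] graph_sym[OF gC] by auto
    qed
    show "finite VD"
    proof (rule finite_subset)
      show "VD \<subseteq> VB \<times> VC" unfolding VD_def by auto
      show "finite (VB \<times> VC)" using finB finC by simp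
    qed
    show "rD \<in> VD" using ps_root[OF psB] ps_root[OF psC] fD(4) gD(4) unfolding rD_def VDm by simp
    show "hD rD = 0" using ps_h0[OF psC] unfolding hD_def rD_def by simp
    show "\<forall>x\<in>VD. x \<noteq> rD \<longrightarrow> pD x \<in> VD \<and> (x, pD x) \<in> ED \<and> Suc (hD (pD x)) = hD x"
    proof (intro ballI impI)
      fix x assume "x \<in> VD" "x \<noteq> rD"
      then show "pD x \<in> VD \<and> (x, pD x) \<in> ED \<and> Suc (hD (pD x)) = hD x"
        using parD by (cases x) auto
    qed
    show "\<forall>u v. (u, v) \<in> ED \<longrightarrow> u = v \<or> u \<noteq> rD \<and> v = pD u \<or> v \<noteq> rD \<and> u = pD v"
    proof (intro allI impI)
      fix u v assume uv: "(u, v) \<in> ED"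
      obtain b c where u: "u = (b, c)" by (cases u)
      obtain b' c' where v: "v = (b', c')" by (cases v)
      have m: "(b, c) \<in> VD" "(b', c') \<in> VD" "(b, b') \<in> EB" "(c, c') \<in> EC" using uv u v by (simp_all add: EDm)
      have m2: "(b', b) \<in> EB" using graph_sym[OF gB m(3)] .
      from ps_edge[OF psC m(4)]
      show "u = v \<or> u \<noteq> rD \<and> v = pD u \<or> v \<noteq> rD \<and> u = pD v"
      proof (elim disjE)
        assume cc: "c = c'"
        have "f b = f b'" using m cc unfolding VDm by simp
        then have "b = b'" using flight m unfolding VDm by blast
        then show ?thesis using u v cc by simp
      next
        assume as: "c \<noteq> rC \<and> c' = pC c"
        then have "v = pD u" using key[OF m(1,2,3)] u v by simp
        moreover have "u \<noteq> rD" using as u unfolding rD_def by simp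
        ultimately show ?thesis by simp
      next
        assume as: "c' \<noteq> rC \<and> c = pC c'"
        then have "u = pD v" using key[OF m(2,1) m2] u v by simp
        moreover have "v \<noteq> rD" using as v unfolding rD_def by simp
        ultimately show ?thesis by simp
      qed
    qed
  qed

  have tD: "rooted_tree VD ED rD" using ps_tree[OF psD] .
  have inVD: "fst x \<in> VB \<and> snd x \<in> VC \<and> f (fst x) = g (snd x)" if "x \<in> VD" for x
    using that VDm by (cases x) auto
  have inED: "fst x \<in> VB \<and> snd x \<in> VC \<and> f (fst x) = g (snd x) \<and> fst y \<in> VB \<and> snd y \<in> VC
     \<and> f (fst y) = g (snd y) \<and> (fst x, fst y) \<in> EB \<and> (snd x, snd y) \<in> EC" if "(x, y) \<in> ED" for x y
    using that unfolding ED_def by (cases x; cases y) auto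
  have stD: "fst (pD x) = fst x \<or> (fst x \<noteq> rB \<and> fst (pD x) = pB (fst x))"
     "snd (pD x) = pC (snd x)" "snd x \<noteq> rC" if "x \<in> VD" "x \<noteq> rD" for x
  proof -
    obtain b c where x: "x = (b, c)" by (cases x)
    show "fst (pD x) = fst x \<or> (fst x \<noteq> rB \<and> fst (pD x) = pB (fst x))"
      "snd (pD x) = pC (snd x)" using parD[of b c] that x by auto
    show "snd x \<noteq> rC" using cne[of b c] that x by auto
  qed
  have fst_img: "fst ` VD = VB"
  proof
    show "fst ` VD \<subseteq> VB" using inVD by auto
    show "VB \<subseteq> fst ` VD"
    proof
      fix b assume b: "b \<in> VB"
      have "f b \<in> g ` VC" using fV[OF b] gD(1) by simp
      then obtain c where c: "c \<in> VC" "f b = g c" by (elim imageE) simp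
      then have "(b, c) \<in> VD" using b VDm by simp
      then show "b \<in> fst ` VD" by (rule rev_image_eqI) simp
    qed
  qed
  have fst_edim: "(\<lambda>(a, b). (fst a, fst b)) ` ED = EB"
  proof
    show "(\<lambda>(a, b). (fst a, fst b)) ` ED \<subseteq> EB" using inED by auto
    show "EB \<subseteq> (\<lambda>(a, b). (fst a, fst b)) ` ED"
    proof
      fix e assume e: "e \<in> EB"
      obtain b b' where bb: "e = (b, b')" by (cases e)
      have bbV: "b \<in> VB" "b' \<in> VB" using graph_in[OF gB] e bb by auto
      have "(f b, f b') \<in> EA" using fD(2) e bb by simp
      then have "(f b, f b') \<in> (\<lambda>(a, b). (g a, g b)) ` EC" using gD(3) by simp
      then obtain e' where e': "e' \<in> EC" "(f b, f b') = (\<lambda>(a, b). (g a, g b)) e'" by (elim imageE) simp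
      obtain c c' where cc: "e' = (c, c')" by (cases e')
      have ccV: "c \<in> VC" "c' \<in> VC" using graph_in[OF gC] e' cc by auto
      have m: "((b, c), (b', c')) \<in> ED" using e e' bb bbV cc ccV by (simp add: EDm VDm)
      show "e \<in> (\<lambda>(a, b). (fst a, fst b)) ` ED"
        by (rule image_eqI[where x="((b, c), (b', c'))"]) (simp_all add: bb m)
    qed
  qed
  have fst_epi: "epimorphism VD ED rD VB EB rB fst"
  proof (rule epiI)
    show "fst ` VD = VB" using fst_img .
    show "\<And>a b. (a, b) \<in> ED \<Longrightarrow> (fst a, fst b) \<in> EB" using inED by simp
    show "(\<lambda>(a, b). (fst a, fst b)) ` ED = EB" using fst_edim .
    show "fst rD = rB" unfolding rD_def by simp
    show "\<forall>a\<in>VD. \<forall>b\<in>VD. tree_le VD ED rD a b \<longrightarrow> tree_le VB EB rB (fst a) (fst b)"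
      by (rule epi_order[OF psD psB]) (use inVD stD in auto)
  qed
  have snd_img: "snd ` VD = VC"
  proof
    show "snd ` VD \<subseteq> VC" using inVD by auto
    show "VC \<subseteq> snd ` VD"
    proof
      fix c assume c: "c \<in> VC"
      have "g c \<in> f ` VB" using gV[OF c] fD(1) by simp
      then obtain b where b: "b \<in> VB" "g c = f b" by (elim imageE) simp
      then have "(b, c) \<in> VD" using c VDm by simp
      then show "c \<in> snd ` VD" by (rule rev_image_eqI) simp
    qed
  qed
  have snd_edim: "(\<lambda>(a, b). (snd a, snd b)) ` ED = EC"
  proof
    show "(\<lambda>(a, b). (snd a, snd b)) ` ED \<subseteq> EC" using inED by auto
    show "EC \<subseteq> (\<lambda>(a, b). (snd a, snd b)) ` ED"
    proof
      fix e assume e: "e \<in> EC"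
      obtain c c' where cc: "e = (c, c')" by (cases e)
      have ccV: "c \<in> VC" "c' \<in> VC" using graph_in[OF gC] e cc by auto
      have ea: "(g c, g c') \<in> EA" using gD(2) e cc by simp
      have "g c \<in> f ` VB" using gV[OF ccV(1)] fD(1) by simp
      then obtain b where b: "b \<in> VB" "g c = f b" by (elim imageE) simp
      obtain b' where b': "b' \<in> VB" "(b, b') \<in> EB" "f b' = g c'" using LS[OF b(1)] ea b(2) by auto
      have m: "((b, c), (b', c')) \<in> ED" using e b b' cc ccV by (simp add: EDm VDm)
      show "e \<in> (\<lambda>(a, b). (snd a, snd b)) ` ED"
        by (rule image_eqI[where x="((b, c), (b', c'))"]) (simp_all add: cc m)
    qed
  qed
  have snd_epi: "epimorphism VD ED rD VC EC rC snd"
  proof (rule epiI)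
    show "snd ` VD = VC" using snd_img .
    show "\<And>a b. (a, b) \<in> ED \<Longrightarrow> (snd a, snd b) \<in> EC" using inED by simp
    show "(\<lambda>(a, b). (snd a, snd b)) ` ED = EC" using snd_edim .
    show "snd rD = rC" unfolding rD_def by simp
    show "\<forall>a\<in>VD. \<forall>b\<in>VD. tree_le VD ED rD a b \<longrightarrow> tree_le VC EC rC (snd a) (snd b)"
      by (rule epi_order[OF psD psC]) (use inVD stD in auto)
  qed
  have snd_light: "light VD ED snd"
    unfolding light_def
  proof (intro ballI impI)
    fix x y assume x: "x \<in> VD" and y: "y \<in> VD" and xy: "x \<noteq> y \<and> snd x = snd y"
    show "(x, y) \<notin> ED"
    proof
      assume e: "(x, y) \<in> ED"
      have "fst x \<noteq> fst y" using xy by (cases x; cases y) auto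
      then have "f (fst x) \<noteq> f (fst y)" using flight inED[OF e] by blast
      then show False using inED[OF e] xy by simp
    qed
  qed
  have snd_conf: "confluent VD ED VC EC snd"
  proof (rule gen_confluent[OF snd_img])
    fix v w assume v: "v \<in> VD" and e: "(snd v, w) \<in> EC"
    obtain b c where bc: "v = (b, c)" by (cases v)
    have bcV: "b \<in> VB" "c \<in> VC" "f b = g c" using v bc VDm by auto
    have wV: "w \<in> VC" using graph_in[OF gC e] by simp
    have ea: "(f b, g w) \<in> EA" using gD(2) e bc bcV(3) by simp
    obtain b' where b': "b' \<in> VB" "(b, b') \<in> EB" "f b' = g w" using LS[OF bcV(1) ea] by auto
    have e1: "((b, c), (b', w)) \<in> ED" using bcV b' wV e bc by (simp add: EDm VDm)
    have e2: "((b', w), (b, c)) \<in> ED" using bcV b' wV e bc graph_sym[OF gB b'(2)] graph_sym[OF gC] by (simp add: EDm VDm)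
    show "\<exists>L. L \<subseteq> VD \<and> connected_set ED L \<and> v \<in> L \<and> snd ` L \<subseteq> {snd v, w} \<and> w \<in> snd ` L"
    proof (intro exI conjI)
      show "{(b, c), (b', w)} \<subseteq> VD" using bcV b' wV VDm by auto
      show "connected_set ED {(b, c), (b', w)}" using conn_pair[OF e1 e2] .
      show "v \<in> {(b, c), (b', w)}" using bc by simp
      show "snd ` {(b, c), (b', w)} \<subseteq> {snd v, w}" using bc by auto
      show "w \<in> snd ` {(b, c), (b', w)}" by auto
    qed
  qed
  have fst_conf: "confluent VD ED VB EB fst"
  proof (rule gen_confluent[OF fst_img])
    fix v w assume v: "v \<in> VD" and e: "(fst v, w) \<in> EB"
    obtain b c where bc: "v = (b, c)" by (cases v)
    have bcV: "b \<in> VB" "c \<in> VC" "f b = g c" using v bc VDm by auto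
    have ebw: "(b, w) \<in> EB" using e bc by simp
    have ewb: "(w, b) \<in> EB" using graph_sym[OF gB ebw] .
    have wV: "w \<in> VB" using graph_in[OF gB ebw] by simp
    define QA where "QA = {f b, f w}"
    have ea: "(f b, f w) \<in> EA" using fD(2)[OF ebw] .
    have QAc: "connected_set EA QA" unfolding QA_def using conn_pair[OF ea graph_sym[OF gA ea]] .
    have QAV: "QA \<subseteq> VA" unfolding QA_def using fV[OF bcV(1)] fV[OF wV] by simp
    define SC where "SC = {c' \<in> VC. g c' \<in> QA}"
    have cS: "c \<in> SC" unfolding SC_def QA_def using bcV by simp
    obtain KC where KC: "component_of EC SC KC" "c \<in> KC"
      using component_exists[of SC c EC] cS finC unfolding SC_def by auto
    have gKC: "g ` KC = QA" using confD[OF g_conf QAV QAc] KC(1) unfolding SC_def by simp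
    have KCS: "KC \<subseteq> SC" "connected_set EC KC" using KC(1) unfolding component_of_def by simp_all
    define \<phi> where "\<phi> c' = (if g c' = f b then b else w)" for c'
    define L where "L = (\<lambda>c'. (\<phi> c', c')) ` KC"
    have phi: "\<phi> c' \<in> VB \<and> c' \<in> VC \<and> f (\<phi> c') = g c' \<and> (\<phi> c' = b \<or> \<phi> c' = w)" if "c' \<in> KC" for c'
    proof -
      have "c' \<in> VC" "g c' = f b \<or> g c' = f w" using that KCS(1) unfolding SC_def QA_def by auto
      then show ?thesis unfolding \<phi>_def using bcV(1) wV by auto
    qed
    have phiE: "(\<phi> c1, \<phi> c2) \<in> EB" if "c1 \<in> KC" "c2 \<in> KC" for c1 c2
    proof -
      have "(b, b) \<in> EB" "(w, w) \<in> EB" using graph_refl[OF gB] bcV(1) wV by auto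
      then show ?thesis using phi[OF that(1)] phi[OF that(2)] ebw ewb by auto
    qed
    show "\<exists>L. L \<subseteq> VD \<and> connected_set ED L \<and> v \<in> L \<and> fst ` L \<subseteq> {fst v, w} \<and> w \<in> fst ` L"
    proof (intro exI conjI)
      show "L \<subseteq> VD" unfolding L_def using phi VDm by auto
      show "connected_set ED L" unfolding L_def
      proof (rule conn_image[OF KCS(2)], intro ballI impI)
        fix x y assume xy: "x \<in> KC" "y \<in> KC" "(x, y) \<in> EC"
        show "((\<phi> x, x), (\<phi> y, y)) \<in> ED" using phi[OF xy(1)] phi[OF xy(2)] phiE[OF xy(1,2)] xy(3)
          by (simp add: EDm VDm)
      qed
      have "\<phi> c = b" unfolding \<phi>_def using bcV(3) by simp
      then show "v \<in> L" unfolding L_def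
        by (rule_tac image_eqI[where x=c]) (simp_all add: bc KC(2))
      show "fst ` L \<subseteq> {fst v, w}"
      proof
        fix y assume "y \<in> fst ` L"
        then obtain c' where c': "c' \<in> KC" "y = \<phi> c'" unfolding L_def by auto
        then have "\<phi> c' = b \<or> \<phi> c' = w" using phi[OF c'(1)] by blast
        then show "y \<in> {fst v, w}" using c'(2) bc by auto
      qed
      have "f w \<in> g ` KC" using gKC unfolding QA_def by simp
      then obtain c'' where c'': "c'' \<in> KC" "f w = g c''" by (elim imageE) simp
      show "w \<in> fst ` L"
      proof (cases "f w = f b")
        case True
        then have "w = b" using flight[OF bcV(1) wV ebw] by auto
        moreover have "(\<phi> c, c) \<in> L" unfolding L_def using KC(2) by simp
        ultimately show ?thesis using \<open>\<phi> c = b\<close>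
          by (intro image_eqI[where x="(\<phi> c, c)"]) simp_all
      next
        case False
        then have "\<phi> c'' = w" unfolding \<phi>_def using c'' by auto
        moreover have "(\<phi> c'', c'') \<in> L" unfolding L_def using c''(1) by simp
        ultimately show ?thesis
          by (intro image_eqI[where x="(\<phi> c'', c'')"]) simp_all
      qed
    qed
  qed
  have comm: "\<forall>x\<in>VD. f (fst x) = g (snd x)" using inVD by simp
  have fst_light: "light VD ED fst" if gl: "light VC EC g"
    unfolding light_def
  proof (intro ballI impI)
    fix x y assume x: "x \<in> VD" and y: "y \<in> VD" and xy: "x \<noteq> y \<and> fst x = fst y"
    show "(x, y) \<notin> ED"
    proof
      assume e: "(x, y) \<in> ED"
      have "snd x \<noteq> snd y" using xy by (cases x; cases y) auto
      then have "g (snd x) \<noteq> g (snd y)" using lightD[OF gl] inED[OF e] by blast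
      moreover have "f (fst x) = f (fst y)" using xy by simp
      ultimately show False using inED[OF e] by auto
    qed
  qed
  have evp: "end_vertex_preserving VD ED rD VB EB rB fst \<and> end_vertex_preserving VD ED rD VC EC rC snd"
    if gev: "end_vertex_preserving VC EC rC VA EA rA g"
  proof -
    have main: "end_vertex VB EB rB b \<and> end_vertex VC EC rC c" if ev: "end_vertex VD ED rD (b, c)" for b c
    proof -
      have evD: "(b, c) \<in> VD" "(b, c) \<noteq> rD" "\<forall>w\<in>VD. w \<noteq> rD \<longrightarrow> pD w \<noteq> (b, c)"
        using ev unfolding end_vertex_iff[OF psD] by auto
      have bcV: "b \<in> VB" "c \<in> VC" "f b = g c" using evD(1) VDm by auto
      have c0: "c \<noteq> rC" using cne[OF evD(1,2)] .
      have cch: "\<forall>c1\<in>VC. c1 \<noteq> rC \<longrightarrow> pC c1 \<noteq> c"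
      proof (intro ballI impI notI)
        fix c1 assume c1: "c1 \<in> VC" "c1 \<noteq> rC" "pC c1 = c"
        show False
        proof (cases "g c1 = g c")
          case True
          have m: "(b, c1) \<in> VD" using bcV c1 True VDm by simp
          have "(b, c1) \<noteq> rD" using c1 unfolding rD_def by simp
          moreover have "pD (b, c1) = (b, c)" unfolding pD_def using c1 True by simp
          ultimately show False using evD(3) m by blast
        next
          case False
          have gc: "g c1 \<noteq> rA" "g c = pA (g c1)" using GC[OF c1(1,2)] False c1(3) by auto
          have "(g c1, pA (g c1)) \<in> EA" using ps_par[OF psA gV[OF c1(1)] gc(1)] by simp
          then have ea: "(f b, g c1) \<in> EA" using graph_sym[OF gA] gc(2) bcV(3) by simp
          obtain b1 where b1: "b1 \<in> VB" "(b, b1) \<in> EB" "f b1 = g c1" using LS[OF bcV(1) ea] by auto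
          have m: "(b1, c1) \<in> VD" using b1 c1 VDm by simp
          have "(b1, c1) \<noteq> rD" using c1 unfolding rD_def by simp
          have bb: "b \<noteq> b1" using b1(3) bcV(3) False by auto
          have pb: "pB b1 = b"
          proof -
            from ps_edge[OF psB b1(2)] bb have "(b \<noteq> rB \<and> b1 = pB b) \<or> (b1 \<noteq> rB \<and> b = pB b1)" by simp
            then show ?thesis
            proof
              assume as: "b \<noteq> rB \<and> b1 = pB b"
              have fb: "f b \<noteq> rA" "f b1 = pA (f b)" using FB[OF bcV(1)] as by auto
              have h1: "Suc (hA (pA (f b))) = hA (f b)" using ps_par[OF psA fV[OF bcV(1)] fb(1)] by simp
              have h2: "Suc (hA (pA (g c1))) = hA (g c1)" using ps_par[OF psA gV[OF c1(1)] gc(1)] by simp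
              show ?thesis using h1 h2 fb gc b1(3) bcV(3) by simp
            qed simp
          qed
          have "pD (b1, c1) = (b, c)" unfolding pD_def using c1 False pb by simp
          then show False using evD(3) m \<open>(b1, c1) \<noteq> rD\<close> by blast
        qed
      qed
      have evC: "end_vertex VC EC rC c" unfolding end_vertex_iff[OF psC] using bcV(2) c0 cch by simp
      have evA: "end_vertex VA EA rA (g c)" using gev evC unfolding end_vertex_preserving_def by blast
      have gA': "g c \<noteq> rA" "\<forall>w\<in>VA. w \<noteq> rA \<longrightarrow> pA w \<noteq> g c" using evA unfolding end_vertex_iff[OF psA] by auto
      have b0: "b \<noteq> rB" using gA'(1) bcV(3) fD(4) by auto
      have bch: "\<forall>b1\<in>VB. b1 \<noteq> rB \<longrightarrow> pB b1 \<noteq> b"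
      proof (intro ballI impI notI)
        fix b1 assume b1: "b1 \<in> VB" "b1 \<noteq> rB" "pB b1 = b"
        have "f b1 \<noteq> rA" "pA (f b1) = g c" using FB[OF b1(1,2)] b1(3) bcV(3) by auto
        then show False using gA'(2) fV[OF b1(1)] by blast
      qed
      have evB: "end_vertex VB EB rB b" unfolding end_vertex_iff[OF psB] using bcV(1) b0 bch by simp
      show ?thesis using evB evC by simp
    qed
    show ?thesis unfolding end_vertex_preserving_def
    proof (intro conjI allI impI)
      fix x assume "end_vertex VD ED rD x"
      then show "end_vertex VB EB rB (fst x)" using main by (cases x) auto
    next
      fix x assume "end_vertex VD ED rD x"
      then show "end_vertex VC EC rC (snd x)" using main by (cases x) auto
    qed
  qed
  show ?thesis using tD fst_epi fst_conf snd_epi snd_light snd_conf comm fst_light evp by blast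
qed

end
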